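(* Consider the real linear measurement model $\bm{y}=\bm{A}\bm{x}+\bm{w}$ with $\bm{A}\in\mathbb{R}^{m\times n}$ having i.i.d. entries $\mathcal{N}(0,1/m)$, $\bm{x}\in\mathbb{R}^n$ having i.i.d. entries drawn from the least-favorable distribution $$p_x=\tfrac{\epsilon}{2}\Delta_{x=-\mu}+(1-\epsilon)\Delta_{x=0}+\tfrac{\epsilon}{2}\Delta_{x=\mu},\qquad \epsilon\in(0,1],$$ in the limit $\mu\to\infty$, and $\bm{w}$ additive white Gaussian noise with i.i.d. entries $\mathcal{N}(0,\sigma_w^2)$ where $\sigma_w^2=\delta\sigma_0^2$, $\delta=m/n$, and $\sigma_0^2>0$ is a constant. Apply the AMP algorithm with the soft-thresholding estimator and optimally tuned threshold (described in the context). Then, asymptotically ($m,n\to\infty$ with $m/n\to\delta$), the number of measurements that minimizes the MSE is $$\delta^{\dagger}=2M(\epsilon,\alpha^{\dagger}),$$ which is independent of the noise variance (i.e. of $\sigma_0^2$).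
   Context: AMP iterates $\bm{x}^{t+1}=\eta(\bm{A}^{T}\bm{r}^{t}+\bm{x}^{t})$, $\bm{r}^{t}=\bm{y}-\bm{A}\bm{x}^{t}+\frac{1}{\delta}\langle\eta'(\bm{A}^{T}\bm{r}^{t-1}+\bm{x}^{t-1})\rangle\bm{r}^{t-1}$ (with $\langle\bm v\rangle=\frac1n\sum_i v_i$, $\bm r^0=\bm y$, $\bm x^0=\bm 0$), where $\eta$ is componentwise soft thresholding $\eta(\beta,\lambda)=\mathrm{sign}(\beta)\max(|\beta|-\lambda,0)$ with threshold $\lambda^t=\alpha^{\dagger}\sigma_e^t$. Its asymptotic performance is described by state evolution: $(\sigma_e^{t+1})^2=\frac{1}{\delta}\mathrm{Err}_{t+1}+\sigma_w^2$, with $\mathrm{Err}_{t+1}=M(\epsilon,\alpha^\dagger)(\sigma_e^t)^2$ in the limit $\mu\to\infty$, where $$M(\epsilon,\alpha)=\epsilon(1+\alpha^2)+(1-\epsilon)\left[2(1+\alpha^2)\Phi(-\alpha)-2\alpha\phi(\alpha)\right],$$ $\phi$ and $\Phi$ are the standard Gaussian density and CDF, and $\alpha^{\dagger}=\arg\min_{\alpha\ge 0}M(\epsilon,\alpha)$. AMP is assumed to converge, i.e. the state evolution reaches a fixed point $\sigma_e^\infty$, and the MSE is $\mathrm{Err}=\lim_{n\to\infty}\frac1n\mathbb{E}\|\bm{x}-\hat{\bm x}\|^2$, given by the fixed-point value $\mathrm{Err}_\infty$ of the state evolution (considered as a function of $\delta$ over the range $\delta>M(\epsilon,\alpha^\dagger)$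 where it is positive). *)

theory Defs
  imports "HOL-Analysis.Analysis"
begin

definition std_phi :: "real \<Rightarrow> real" where
  "std_phi x = exp (- (x^2) / 2) / sqrt (2 * pi)"

definition std_Phi :: "real \<Rightarrow> real" where
  "std_Phi x = (LBINT t:{..x}. std_phi t)"

text \<open>Normalized MSE of soft thresholding at threshold alpha*sigma in the limit mu to infinity.\<close>
definition M_fun :: "real \<Rightarrow> real \<Rightarrow> real" where
  "M_fun eps a = eps * (1 + a^2)
     + (1 - eps) * (2 * (1 + a^2) * std_Phi (- a) - 2 * a * std_phi a)"

definition alpha_dag :: "real \<Rightarrow> real" where
  "alpha_dag eps = (SOME a. a \<ge> 0 \<and> (\<forall>b\<ge>0. M_fun eps a \<le> M_fun eps b))"

text \<open>State evolution map for the effective noise variance (sigma_e^t)^2, with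
  sigma_w^2 = delta * s0 (s0 = sigma_0^2) and Err_{t+1} = M(eps, alpha_dag) (sigma_e^t)^2.\<close>
definition SE_step :: "real \<Rightarrow> real \<Rightarrow> real \<Rightarrow> real \<Rightarrow> real" where
  "SE_step eps s0 delta v = (1 / delta) * (M_fun eps (alpha_dag eps) * v) + delta * s0"

definition Err_inf :: "real \<Rightarrow> real \<Rightarrow> real \<Rightarrow> real" where
  "Err_inf eps s0 delta =
     M_fun eps (alpha_dag eps) * (THE v. v > 0 \<and> SE_step eps s0 delta v = v)"

end

theory Submission imports Defs "HOL-Probability.Distributions" "HOL-Real_Asymp.Real_Asymp" begin

lemma phi_eq: "std_phi x = std_normal_density x"
  by (simp add: std_phi_def std_normal_density_def)

lemma integ_k: "set_integrable lborel S (\<lambda>t. std_phi t * t ^ k)" if "S \<in> sets lborel"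
proof -
  have "integrable lborel (\<lambda>t. std_phi t * t ^ k)"
    using integrable_std_normal_moment[of k] by (simp add: phi_eq)
  then show ?thesis unfolding set_integrable_def using that
    by (intro integrable_mult_indicator) auto
qed

lemma lt_to_le: "(LBINT t:{..<b}. f t) = (LBINT t:{..b::real}. (f t::real))"
  by (rule set_integral_discrete_difference[where X="{b}"]) auto

lemma FTC_gen:
  fixes F f :: "real \<Rightarrow> real"
  assumes "\<And>x. (F has_real_derivative f x) (at x)" "continuous_on UNIV f"
    "set_integrable lborel {..<b} f" "(F \<longlongrightarrow> 0) at_bot"
  shows "(LBINT t:{..b}. f t) = F b"
proof -
  have "(LBINT x=-\<infinity>..ereal b. f x) = F b - 0"
  proof (rule interval_integral_FTC_integrable)
    show "((F \<circ> real_of_ereal) \<longlongrightarrow> 0) (at_right (-\<infinity>))"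
      using assms(4) by (simp add: ereal_tendsto_simps)
    show "((F \<circ> real_of_ereal) \<longlongrightarrow> F b) (at_left (ereal b))"
      unfolding ereal_tendsto_simps using assms(1) DERIV_isCont isCont_def
      by (metis tendsto_at_left_sequentially  filterlim_at_split) 
  qed (use assms in \<open>auto simp: has_real_derivative_iff_has_vector_derivative[symmetric] continuous_on_eq_continuous_at\<close>)
  then show ?thesis
    by (simp add: interval_lebesgue_integral_def lt_to_le)
qed

lemma phi_deriv: "(std_phi has_real_derivative (- x * std_phi x)) (at x)"
  unfolding std_phi_def by (auto intro!: derivative_eq_intros simp: field_simps power2_eq_square)

lemma cont_phi: "continuous_on UNIV (\<lambda>t. std_phi t * t ^ k)"
  unfolding std_phi_def by (intro continuous_intros) auto

lemma I1: "(LBINT t:{..b}. std_phi t * t ^ 1) = - std_phi b"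
proof (rule FTC_gen)
  show "((\<lambda>t. - std_phi t) has_real_derivative std_phi x * x ^ 1) (at x)" for x
    using phi_deriv[of x] by (auto intro!: derivative_eq_intros)
  show "((\<lambda>t. - std_phi t) \<longlongrightarrow> 0) at_bot"
    unfolding std_phi_def by real_asymp
qed (use integ_k[of "{..<b}" 1] cont_phi[of 1] in auto)

lemma I2: "(LBINT t:{..b}. std_phi t * t ^ 2 - std_phi t * t ^ 0) = - b * std_phi b"
proof (rule FTC_gen)
  show "((\<lambda>t. - t * std_phi t) has_real_derivative std_phi x * x ^ 2 - std_phi x * x ^ 0) (at x)" for x
    using phi_deriv[of x] by (auto intro!: derivative_eq_intros simp: algebra_simps power2_eq_square)
  show "((\<lambda>t. - t * std_phi t) \<longlongrightarrow> 0) at_bot"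
    unfolding std_phi_def by real_asymp
  show "continuous_on UNIV (\<lambda>t. std_phi t * t ^ 2 - std_phi t * t ^ 0)"
    using cont_phi[of 2] cont_phi[of 0] by (intro continuous_intros) auto
qed (use integ_k[of "{..<b}" 2] integ_k[of "{..<b}" 0] in auto)

lemma key: "(1 + b^2) * std_Phi b + b * std_phi b \<ge> 0"
proof -
  let ?S = "{..b}"
  have i0: "set_integrable lborel ?S std_phi" using integ_k[of ?S 0] by simp
  have i1: "set_integrable lborel ?S (\<lambda>t. std_phi t * t)" using integ_k[of ?S 1] by simp
  have i2: "set_integrable lborel ?S (\<lambda>t. std_phi t * t^2)" using integ_k[of ?S 2] by simp
  have J1: "(LBINT t:?S. std_phi t * t) = - std_phi b" using I1[of b] by simp
  have "(LBINT t:?S. std_phi t * t^2 - std_phi t) = - b * std_phi b" using I2[of b] by simp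
  then have J2: "(LBINT t:?S. std_phi t * t^2) = - b * std_phi b + std_Phi b"
    using set_integral_diff(2)[OF i2 i0] by (simp add: std_Phi_def)
  have i3: "set_integrable lborel ?S (\<lambda>t. (2*b) * (std_phi t * t))" using i1 by simp
  have i4: "set_integrable lborel ?S (\<lambda>t. b^2 * std_phi t)" using i0 by simp
  have "0 \<le> (LBINT t:?S. std_phi t * (t - b)^2)"
    unfolding set_lebesgue_integral_def by (rule Bochner_Integration.integral_nonneg) (auto simp: std_phi_def indicator_def)
  also have "\<dots> = (LBINT t:?S. (std_phi t * t^2 - (2*b) * (std_phi t * t)) + b^2 * std_phi t)"
    by (rule set_lebesgue_integral_cong) (auto simp: algebra_simps power2_eq_square)
  also have "\<dots> = (LBINT t:?S. std_phi t * t^2 - (2*b) * (std_phi t * t)) + (LBINT t:?S. b^2 * std_phi t)"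
    by (rule set_integral_add(2)[OF set_integral_diff(1)[OF i2 i3] i4])
  also have "\<dots> = (LBINT t:?S. std_phi t * t^2) - (LBINT t:?S. (2*b) * (std_phi t * t)) + (LBINT t:?S. b^2 * std_phi t)"
    using set_integral_diff(2)[OF i2 i3] by simp
  also have "\<dots> = (- b * std_phi b + std_Phi b) - 2*b*(- std_phi b) + b^2 * std_Phi b"
    by (simp only: set_integral_mult_right J1 J2 std_Phi_def)
  finally show ?thesis by (simp add: algebra_simps)
qed

lemma phi_neg: "std_phi (- a) = std_phi a" by (simp add: std_phi_def)

lemma M_pos: assumes "0 < eps" "eps \<le> 1" shows "M_fun eps a > 0"
proof -
  have "0 \<le> (1 + (-a)^2) * std_Phi (-a) + (-a) * std_phi (-a)" by (rule key)
  then have "0 \<le> (1 + a^2) * std_Phi (- a) - a * std_phi a" by (simp add: phi_neg)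
  then have "0 \<le> 2 * (1 + a^2) * std_Phi (- a) - 2 * a * std_phi a" by linarith
  moreover have "0 \<le> 1 - eps" using assms by simp
  ultimately have "0 \<le> (1 - eps) * (2 * (1 + a^2) * std_Phi (- a) - 2 * a * std_phi a)" by simp
  moreover have "0 < eps * (1 + a^2)" using assms by (simp add: add_pos_nonneg)
  ultimately show ?thesis unfolding M_fun_def by linarith
qed

lemma Err_formula:
  assumes "0 < M_fun eps (alpha_dag eps)" "M_fun eps (alpha_dag eps) < d" "0 < s0"
  shows "Err_inf eps s0 d = M_fun eps (alpha_dag eps) * (d^2 * s0 / (d - M_fun eps (alpha_dag eps)))"
proof -
  let ?M = "M_fun eps (alpha_dag eps)"
  have d: "0 < d" "0 < d - ?M" using assms by auto
  have "(THE v. v > 0 \<and> SE_step eps s0 d v = v) = d^2 * s0 / (d - ?M)"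
  proof (rule the_equality)
    show "0 < d^2 * s0 / (d - ?M) \<and> SE_step eps s0 d (d^2 * s0 / (d - ?M)) = d^2 * s0 / (d - ?M)"
      using d assms(3) by (auto simp: SE_step_def field_simps power2_eq_square)
    fix v assume "0 < v \<and> SE_step eps s0 d v = v"
    then have "(1 / d) * (?M * v) + d * s0 = v" by (simp add: SE_step_def)
    then have "?M * v + d^2 * s0 = d * v" using d by (simp add: field_simps power2_eq_square)
    then have "v * (d - ?M) = d^2 * s0" by (simp add: algebra_simps)
    then show "v = d^2 * s0 / (d - ?M)" using d by (simp add: field_simps)
  qed
  then show ?thesis by (simp add: Err_inf_def)
qed

theorem theorem1:
  fixes eps s0 :: real
  assumes "0 < eps" and "eps \<le> 1" and "0 < s0"
  shows "2 * M_fun eps (alpha_dag eps) > M_fun eps (alpha_dag eps) \<and>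
         (\<forall>delta. delta > M_fun eps (alpha_dag eps) \<and> delta \<noteq> 2 * M_fun eps (alpha_dag eps)
            \<longrightarrow> Err_inf eps s0 (2 * M_fun eps (alpha_dag eps)) < Err_inf eps s0 delta)"
proof -
  let ?M = "M_fun eps (alpha_dag eps)"
  have M: "0 < ?M" using M_pos assms by blast
  have E2: "Err_inf eps s0 (2 * ?M) = 4 * ?M^2 * s0"
    using Err_formula[OF M _ assms(3), of "2 * ?M"] M by (simp add: field_simps power2_eq_square)
  show ?thesis
  proof (intro conjI allI impI)
    show "2 * ?M > ?M" using M by simp
    fix d assume h: "d > ?M \<and> d \<noteq> 2 * ?M"
    have Ed: "Err_inf eps s0 d = ?M * (d^2 * s0 / (d - ?M))" using Err_formula[OF M _ assms(3)] h by blast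
    have pos: "0 < d - ?M" using h by simp
    have "0 < (d - 2 * ?M)^2" using h by simp
    then have "4 * ?M * (d - ?M) < d^2" by (simp add: power2_eq_square algebra_simps)
    then have "4 * ?M * s0 * (d - ?M) < s0 * d^2" using assms(3)
      by (metis mult.commute mult.left_commute mult_less_cancel_left_pos)
    then have "?M * (4 * ?M * s0 * (d - ?M)) < ?M * (s0 * d^2)" using M by simp
    then have "4 * ?M^2 * s0 < ?M * (d^2 * s0 / (d - ?M))" using pos
      by (simp add: field_simps power2_eq_square)
    then show "Err_inf eps s0 (2 * ?M) < Err_inf eps s0 d" using E2 Ed by simp
  qed
qed

end
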